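(* Let $L=\langle S,A,\to\rangle$ be a labelled transition system and $s,t\in S$. Then $s\equiv_b t$ if and only if $s\equiv_\emptyset t$.
   Context: An LTS is $\langle S,A,\to\rangle$ with states $S$, actions $A$ containing the internal action $\tau$, and $\to\subseteq S\times A\times S$; write $s\xrightarrow{a}t$. In both games below, Duplicator wins a finite play if Spoiler gets stuck, and an infinite play if it contains infinitely many configurations with reward $\checkmark$; all other plays are won by Spoiler. Branching bisimulation game: Spoiler-owned configurations $\langle (s,t),c,r\rangle_S$ and Duplicator-owned $\langle (s,t),c,r\rangle_D$ with $(s,t)\in S\times S$, $c\in (A\times S)\cup\{\dagger\}$, $r\in\{*,\checkmark\}$. From $\langle (s,t),c,r\rangle_S$ Spoiler may: (1) select $s\xrightarrow{a}s'$ and move to $\langle (s,t),(a,s'),*\rangle_D$ if $c=(a,s')$ or $c=\dagger$, and to $\langle (s,t),(a,s'),\checkmark\rangle_D$ otherwise; (2) select $t\xrightarrow{a}t'$ and move to $\langle (t,s),(a,t'),\checkmark\rangle_D$. From $\langle (u,v),(a,u'),r\rangle_D$ Duplicator may: (1) if $a=\tau$, move to $\langle (u',v),\dagger,\checkmark\rangle_S$; (2) for some $v\xrightarrow{a}v'$, move to $\langle (u',v'),\dagger,\checkmark\rangle_S$; (3) for some $v\xrightarrow{\tau}v'$, move to $\langle (u,v'),(a,u'),*\rangle_S$. $s\equiv_b t$ iff Duplicator has a strategy winning all plays from $\langle (s,t),\dagger,*\rangle_S$. $\emptyset$-generic bisimulation game: with formal tags $\frown,\smile$, Spoiler-owned configurations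 $\langle (s,t),c,m,r\rangle_S$ and Duplicator-owned $\langle (s,t),c,m,r\rangle_D$ with $(s,t)\in S\times S$, $c\in (A\times S)\cup\{\dagger\}$, $m\in (S\times\{\frown,\smile\})\cup\{\dagger\}$, $r\in\{*,\checkmark\}$. Spoiler from $\langle (s,t),c,m,r\rangle_S$ may: (S1) move to $\langle (s,t),c,m,*\rangle_D$ if $c\neq\dagger$; (S2a) for some $s\xrightarrow{a}s'$, move to $\langle (s,t),(a,s'),(t,\frown),*\rangle_D$ if $c=\dagger$; (S2b) for some $s\xrightarrow{a}s'$, move to $\langle (s,t),(a,s'),(t,\frown),\checkmark\rangle_D$ if $c\neq (a,s')$; (S3) for some $t\xrightarrow{a}t'$, move to $\langle (t,s),(a,t'),(s,\frown),\checkmark\rangle_D$. Duplicator from $\langle (u,v),(a,u'),(\bar v,f),r\rangle_D$ may: (D1) move to $\langle (u',\bar v),\dagger,\dagger,\checkmark\rangle_S$ if $a=\tau$; (D2) if $f=\frown$ and $\bar v\xrightarrow{a}v'$: (a) move to $\langle (u',v'),(a,u'),(v',\smile),*\rangle_S$ or (b) move to $\langle (u',v'),\dagger,\dagger,\checkmark\rangle_S$; (D3) for some $\bar v\xrightarrow{\tau}v'$: (a) move to $\langle (u,v'),(a,u'),(v',f),*\rangle_S$, or (b) only if $f=\smile$, move to $\langle (u',v'),\dagger,\dagger,\checkmark\rangle_S$. $s\equiv_\emptyset t$ iff Duplicator has a strategy winning all plays from $\langle (s,t),\dagger,\dagger,*\rangle_S$. *)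

theory Defs
  imports Main
begin

text \<open>A game is given by a move relation mv, a predicate D marking the
Duplicator-owned configurations (all others are Spoiler-owned), and a predicate
G marking configurations with reward checkmark.  Duplicator strategies may depend
on the whole history (a nonempty list of configurations, last element current).\<close>

definition dup_strategy :: "('c \<Rightarrow> 'c \<Rightarrow> bool) \<Rightarrow> ('c \<Rightarrow> bool) \<Rightarrow> ('c list \<Rightarrow> 'c) \<Rightarrow> bool" where
  "dup_strategy mv D \<sigma> \<longleftrightarrow>
     (\<forall>h. h \<noteq> [] \<longrightarrow> D (last h) \<longrightarrow> (\<exists>c'. mv (last h) c') \<longrightarrow> mv (last h) (\<sigma> h))"

definition fin_play :: "('c \<Rightarrow> 'c \<Rightarrow> bool) \<Rightarrow> ('c \<Rightarrow> bool) \<Rightarrow> ('c list \<Rightarrow> 'c) \<Rightarrow> 'c \<Rightarrow> 'c list \<Rightarrow> bool" where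
  "fin_play mv D \<sigma> c0 p \<longleftrightarrow>
     p \<noteq> [] \<and> hd p = c0 \<and>
     (\<forall>i. Suc i < length p \<longrightarrow> mv (p ! i) (p ! Suc i) \<and>
                                 (D (p ! i) \<longrightarrow> p ! Suc i = \<sigma> (take (Suc i) p))) \<and>
     \<not> (\<exists>c'. mv (last p) c')"

definition inf_play :: "('c \<Rightarrow> 'c \<Rightarrow> bool) \<Rightarrow> ('c \<Rightarrow> bool) \<Rightarrow> ('c list \<Rightarrow> 'c) \<Rightarrow> 'c \<Rightarrow> (nat \<Rightarrow> 'c) \<Rightarrow> bool" where
  "inf_play mv D \<sigma> c0 f \<longleftrightarrow>
     f 0 = c0 \<and>
     (\<forall>i. mv (f i) (f (Suc i)) \<and> (D (f i) \<longrightarrow> f (Suc i) = \<sigma> (map f [0..<Suc i])))"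

definition dup_wins :: "('c \<Rightarrow> 'c \<Rightarrow> bool) \<Rightarrow> ('c \<Rightarrow> bool) \<Rightarrow> ('c \<Rightarrow> bool) \<Rightarrow> 'c \<Rightarrow> bool" where
  "dup_wins mv D G c0 \<longleftrightarrow>
     (\<exists>\<sigma>. dup_strategy mv D \<sigma> \<and>
          (\<forall>p. fin_play mv D \<sigma> c0 p \<longrightarrow> \<not> D (last p)) \<and>
          (\<forall>f. inf_play mv D \<sigma> c0 f \<longrightarrow> infinite {i. G (f i)}))"

text \<open>An LTS over state type 's and action type 'a is a transition predicate
step s a s'; tau is the internal action.  Rewards: True = checkmark, False = *.\<close>

text \<open>Component c: None = dagger, Some (a,s') = (a,s').\<close>
datatype ('s, 'a) bconf =
    BS "'s \<times> 's" "('a \<times> 's) option" bool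
  | BD "'s \<times> 's" "('a \<times> 's) option" bool

fun bmove :: "('s \<Rightarrow> 'a \<Rightarrow> 's \<Rightarrow> bool) \<Rightarrow> 'a \<Rightarrow> ('s,'a) bconf \<Rightarrow> ('s,'a) bconf \<Rightarrow> bool" where
  "bmove step tau (BS (s,t) c r) g =
     ((\<exists>a s'. step s a s' \<and>
         g = BD (s,t) (Some (a,s')) (\<not> (c = Some (a,s') \<or> c = None))) \<or>
      (\<exists>a t'. step t a t' \<and> g = BD (t,s) (Some (a,t')) True))"
| "bmove step tau (BD (u,v) None r) g = False"
| "bmove step tau (BD (u,v) (Some (a,u')) r) g =
     ((a = tau \<and> g = BS (u',v) None True) \<or>
      (\<exists>v'. step v a v' \<and> g = BS (u',v') None True) \<or>
      (\<exists>v'. step v tau v' \<and> g = BS (u,v') (Some (a,u')) False))"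

fun bdup :: "('s,'a) bconf \<Rightarrow> bool" where
  "bdup (BS _ _ _) = False"
| "bdup (BD _ _ _) = True"

fun breward :: "('s,'a) bconf \<Rightarrow> bool" where
  "breward (BS _ _ r) = r"
| "breward (BD _ _ r) = r"

definition branching_bisim :: "('s \<Rightarrow> 'a \<Rightarrow> 's \<Rightarrow> bool) \<Rightarrow> 'a \<Rightarrow> 's \<Rightarrow> 's \<Rightarrow> bool" where
  "branching_bisim step tau s t \<longleftrightarrow>
     dup_wins (bmove step tau) bdup breward (BS (s,t) None False)"

datatype tag = Frown | Smile

text \<open>Component m: None = dagger, Some (v, f).\<close>
datatype ('s, 'a) gconf =
    GS "'s \<times> 's" "('a \<times> 's) option" "('s \<times> tag) option" bool
  | GD "'s \<times> 's" "('a \<times> 's) option" "('s \<times> tag) option" bool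

fun gmove :: "('s \<Rightarrow> 'a \<Rightarrow> 's \<Rightarrow> bool) \<Rightarrow> 'a \<Rightarrow> ('s,'a) gconf \<Rightarrow> ('s,'a) gconf \<Rightarrow> bool" where
  "gmove step tau (GS (s,t) c m r) g =
     ((c \<noteq> None \<and> g = GD (s,t) c m False) \<or>
      (\<exists>a s'. c = None \<and> step s a s' \<and> g = GD (s,t) (Some (a,s')) (Some (t,Frown)) False) \<or>
      (\<exists>a s'. c \<noteq> Some (a,s') \<and> step s a s' \<and> g = GD (s,t) (Some (a,s')) (Some (t,Frown)) True) \<or>
      (\<exists>a t'. step t a t' \<and> g = GD (t,s) (Some (a,t')) (Some (s,Frown)) True))"
| "gmove step tau (GD (u,v) (Some (a,u')) (Some (vb,f)) r) g =
     ((a = tau \<and> g = GS (u',vb) None None True) \<or>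
      (\<exists>v'. f = Frown \<and> step vb a v' \<and>
         (g = GS (u',v') (Some (a,u')) (Some (v',Smile)) False \<or> g = GS (u',v') None None True)) \<or>
      (\<exists>v'. step vb tau v' \<and>
         (g = GS (u,v') (Some (a,u')) (Some (v',f)) False \<or>
          (f = Smile \<and> g = GS (u',v') None None True))))"
| "gmove step tau (GD _ _ _ _) g = False"

fun gdup :: "('s,'a) gconf \<Rightarrow> bool" where
  "gdup (GS _ _ _ _) = False"
| "gdup (GD _ _ _ _) = True"

fun greward :: "('s,'a) gconf \<Rightarrow> bool" where
  "greward (GS _ _ _ r) = r"
| "greward (GD _ _ _ r) = r"

definition empty_generic_bisim :: "('s \<Rightarrow> 'a \<Rightarrow> 's \<Rightarrow> bool) \<Rightarrow> 'a \<Rightarrow> 's \<Rightarrow> 's \<Rightarrow> bool" where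
  "empty_generic_bisim step tau s t \<longleftrightarrow>
     dup_wins (gmove step tau) gdup greward (GS (s,t) None None False)"

end

theory Submission imports Defs begin

definition cons_h :: "('c \<Rightarrow> 'c \<Rightarrow> bool) \<Rightarrow> ('c \<Rightarrow> bool) \<Rightarrow> ('c list \<Rightarrow> 'c) \<Rightarrow> 'c \<Rightarrow> 'c list \<Rightarrow> bool" where
  "cons_h mv D \<sigma> c0 h \<longleftrightarrow> h \<noteq> [] \<and> hd h = c0 \<and>
     (\<forall>i. Suc i < length h \<longrightarrow> mv (h ! i) (h ! Suc i) \<and>
                                 (D (h ! i) \<longrightarrow> h ! Suc i = \<sigma> (take (Suc i) h)))"

definition winning :: "('c \<Rightarrow> 'c \<Rightarrow> bool) \<Rightarrow> ('c \<Rightarrow> bool) \<Rightarrow> ('c \<Rightarrow> bool) \<Rightarrow> ('c list \<Rightarrow> 'c) \<Rightarrow> 'c \<Rightarrow> bool" where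
  "winning mv D G \<sigma> c0 \<longleftrightarrow> dup_strategy mv D \<sigma> \<and>
          (\<forall>p. fin_play mv D \<sigma> c0 p \<longrightarrow> \<not> D (last p)) \<and>
          (\<forall>f. inf_play mv D \<sigma> c0 f \<longrightarrow> infinite {i. G (f i)})"

lemma dup_wins_winning: "dup_wins mv D G c0 \<longleftrightarrow> (\<exists>\<sigma>. winning mv D G \<sigma> c0)"
  unfolding dup_wins_def winning_def by blast

lemma cons_single: "cons_h mv D \<sigma> c0 [c0]"
  unfolding cons_h_def by simp

lemma cons_snoc:
  assumes "cons_h mv D \<sigma> c0 h" "mv (last h) c" "D (last h) \<Longrightarrow> c = \<sigma> h"
  shows "cons_h mv D \<sigma> c0 (h @ [c])"
proof -
  have h: "h \<noteq> []" "hd h = c0" using assms(1) unfolding cons_h_def by auto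
  have "\<forall>i. Suc i < length (h @ [c]) \<longrightarrow> mv ((h @ [c]) ! i) ((h @ [c]) ! Suc i) \<and>
        (D ((h @ [c]) ! i) \<longrightarrow> (h @ [c]) ! Suc i = \<sigma> (take (Suc i) (h @ [c])))"
  proof (intro allI impI)
    fix i assume i: "Suc i < length (h @ [c])"
    show "mv ((h @ [c]) ! i) ((h @ [c]) ! Suc i) \<and>
        (D ((h @ [c]) ! i) \<longrightarrow> (h @ [c]) ! Suc i = \<sigma> (take (Suc i) (h @ [c])))"
    proof (cases "Suc i < length h")
      case True
      then show ?thesis using assms(1) unfolding cons_h_def by (auto simp: nth_append)
    next
      case False
      then have e: "Suc i = length h" using i by simp
      then have "h ! i = last h" using h by (simp add: last_conv_nth e[symmetric])
      then show ?thesis using e assms by (auto simp: nth_append)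
    qed
  qed
  then show ?thesis using h unfolding cons_h_def by simp
qed

lemma cons_take:
  assumes "cons_h mv D \<sigma> c0 h" "0 < n"
  shows "cons_h mv D \<sigma> c0 (take n h)"
  using assms unfolding cons_h_def by (auto simp: min_def hd_take take_take)

lemma cons_last_take: "cons_h mv D \<sigma> c0 h \<Longrightarrow> i < length h \<Longrightarrow> last (take (Suc i) h) = h ! i"
  by (auto simp add: last_conv_nth cons_h_def min_def intro!: arg_cong[where f="(!) h"])

lemma fin_play_cons: "fin_play mv D \<sigma> c0 p \<longleftrightarrow> cons_h mv D \<sigma> c0 p \<and> \<not> (\<exists>c'. mv (last p) c')"
  unfolding fin_play_def cons_h_def by blast

lemma win_move:
  assumes "winning mv D G \<sigma> c0" "cons_h mv D \<sigma> c0 h" "D (last h)"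
  shows "mv (last h) (\<sigma> h)"
proof (cases "\<exists>c'. mv (last h) c'")
  case True
  then show ?thesis using assms unfolding winning_def dup_strategy_def cons_h_def by blast
next
  case False
  then have "fin_play mv D \<sigma> c0 h" using assms(2) by (simp add: fin_play_cons)
  then show ?thesis using assms unfolding winning_def by blast
qed

lemma win_cons_step:
  assumes "winning mv D G \<sigma> c0" "cons_h mv D \<sigma> c0 h" "D (last h)"
  shows "cons_h mv D \<sigma> c0 (h @ [\<sigma> h])"
  using cons_snoc[OF assms(2) win_move[OF assms]] by blast

lemma inf_of_cons:
  assumes "\<And>n. cons_h mv D \<sigma> c0 (map f [0..<Suc n])"
  shows "inf_play mv D \<sigma> c0 f"
  unfolding inf_play_def
proof (intro conjI allI impI)
  show "f 0 = c0" using assms[of 0] unfolding cons_h_def by simp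
  fix i
  have c: "cons_h mv D \<sigma> c0 (map f [0..<Suc (Suc i)])" by (rule assms)
  have t: "take (Suc i) (map f [0..<Suc (Suc i)]) = map f [0..<Suc i]"
    by (simp add: take_map)
  have "mv (map f [0..<Suc (Suc i)] ! i) (map f [0..<Suc (Suc i)] ! Suc i) \<and>
    (D (map f [0..<Suc (Suc i)] ! i) \<longrightarrow> map f [0..<Suc (Suc i)] ! Suc i = \<sigma> (take (Suc i) (map f [0..<Suc (Suc i)])))"
    using c unfolding cons_h_def by (simp del: upt_Suc)
  then show "mv (f i) (f (Suc i))" "D (f i) \<Longrightarrow> f (Suc i) = \<sigma> (map f [0..<Suc i])"
    using t by (simp_all del: upt_Suc)
qed

lemma cons_of_inf:
  assumes "inf_play mv D \<sigma> c0 f"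
  shows "cons_h mv D \<sigma> c0 (map f [0..<Suc n])"
  using assms unfolding inf_play_def cons_h_def
  by (auto simp: take_map hd_map simp del: upt_Suc)

lemma no_bad_ext:
  assumes win: "winning mv D G \<sigma> c0" and P0: "P h0"
    and Pc: "\<And>h. P h \<Longrightarrow> cons_h mv D \<sigma> c0 h"
    and step: "\<And>h. P h \<Longrightarrow> \<exists>h'. h' \<noteq> [] \<and> P (h @ h') \<and> (\<forall>c\<in>set h'. \<not> G c)"
  shows False
proof -
  define nx where "nx h = (SOME h'. h' \<noteq> [] \<and> P (h @ h') \<and> (\<forall>c\<in>set h'. \<not> G c))" for h
  define H where "H n = rec_nat h0 (\<lambda>_ h. h @ nx h) n" for n
  have H0: "H 0 = h0" and HS: "H (Suc n) = H n @ nx (H n)" for n by (simp_all add: H_def)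
  have nx_prop: "nx h \<noteq> [] \<and> P (h @ nx h) \<and> (\<forall>c\<in>set (nx h). \<not> G c)" if "P h" for h
    unfolding nx_def using someI_ex[OF step[OF that]] by blast
  have P: "P (H n)" for n by (induction n) (auto simp: H0 HS nx_prop P0)
  have h0ne: "h0 \<noteq> []" using Pc[OF P0] unfolding cons_h_def by simp
  have len: "n < length (H n)" for n
  proof (induction n)
    case 0 then show ?case using h0ne by (simp add: H0)
  next
    case (Suc n)
    have "nx (H n) \<noteq> []" using nx_prop[OF P] by blast
    then have "0 < length (nx (H n))" by simp
    then show ?case using Suc by (cases "nx (H n)") (auto simp: HS)
  qed
  have ext: "\<exists>e. H n = H m @ e" if "m \<le> n" for m n
    using that
  proof (induction n rule: dec_induct)
    case base then show ?case by simp
  next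
    case (step n) then show ?case by (auto simp: HS)
  qed
  define f where "f i = H i ! i" for i
  have fH: "f i = H n ! i" if le: "i \<le> n" for i n
  proof -
    obtain e where "H n = H i @ e" using ext[OF le] by blast
    then show ?thesis using len[of i] by (simp add: f_def nth_append)
  qed
  have mp: "map f [0..<Suc n] = take (Suc n) (H n)" for n
  proof (rule nth_equalityI)
    show "length (map f [0..<Suc n]) = length (take (Suc n) (H n))" using len[of n] by simp
    fix j assume "j < length (map f [0..<Suc n])"
    then have "j \<le> n" by simp
    then show "map f [0..<Suc n] ! j = take (Suc n) (H n) ! j"
      using fH[of j n] by (simp del: upt_Suc)
  qed
  have "inf_play mv D \<sigma> c0 f"
    by (rule inf_of_cons) (simp only: mp, rule cons_take[OF Pc[OF P]], simp)
  then have inf: "infinite {i. G (f i)}" using win unfolding winning_def by blast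
  have noG: "\<not> G (H n ! i)" if "length h0 \<le> i" "i < length (H n)" for n i
    using that
  proof (induction n)
    case 0 then show ?case by (simp add: H0)
  next
    case (Suc n)
    show ?case
    proof (cases "i < length (H n)")
      case True then show ?thesis using Suc by (simp add: HS nth_append)
    next
      case False
      then have "H (Suc n) ! i \<in> set (nx (H n))" using Suc.prems by (simp add: HS nth_append)
      then show ?thesis using nx_prop[OF P] by blast
    qed
  qed
  have "{i. G (f i)} \<subseteq> {..<length h0}"
  proof
    fix i assume "i \<in> {i. G (f i)}"
    then show "i \<in> {..<length h0}" using noG[of i i] len[of i] unfolding f_def by force
  qed
  then show False using inf finite_subset by blast
qed

lemma positional_win:
  assumes inv0: "INV c0"
    and invS: "\<And>c c'. INV c \<Longrightarrow> \<not> D c \<Longrightarrow> mv c c' \<Longrightarrow> INV c'"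
    and invD: "\<And>c. INV c \<Longrightarrow> D c \<Longrightarrow> mv c (\<sigma>' c) \<and> INV (\<sigma>' c)"
    and strat: "\<And>c. D c \<Longrightarrow> \<exists>c'. mv c c' \<Longrightarrow> mv c (\<sigma>' c)"
    and desc: "\<And>f N. (\<And>i. INV (f i)) \<Longrightarrow> (\<And>i. mv (f i) (f (Suc i))) \<Longrightarrow>
        (\<And>i. D (f i) \<Longrightarrow> f (Suc i) = \<sigma>' (f i)) \<Longrightarrow> (\<And>i. N \<le> i \<Longrightarrow> \<not> G (f i)) \<Longrightarrow> False"
  shows "dup_wins mv D G c0"
proof -
  define \<sigma> where "\<sigma> h = \<sigma>' (last h)" for h
  have consinv: "INV (h ! i)" if c: "cons_h mv D \<sigma> c0 h" and "i < length h" for h i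
    using that(2)
  proof (induction i)
    case 0 then show ?case using c inv0 unfolding cons_h_def by (metis hd_conv_nth)
  next
    case (Suc i)
    then have i: "i < length h" by simp
    have m: "mv (h ! i) (h ! Suc i)" and d: "D (h ! i) \<Longrightarrow> h ! Suc i = \<sigma> (take (Suc i) h)"
      using c Suc.prems unfolding cons_h_def by blast+
    have "\<sigma> (take (Suc i) h) = \<sigma>' (h ! i)" unfolding \<sigma>_def using cons_last_take[OF c i] by simp
    then show ?case using Suc.IH[OF i] m d invS invD by (cases "D (h ! i)") auto
  qed
  have "winning mv D G \<sigma> c0"
    unfolding winning_def
  proof (intro conjI allI impI)
    show "dup_strategy mv D \<sigma>" unfolding dup_strategy_def \<sigma>_def using strat by blast
  next
    fix p assume "fin_play mv D \<sigma> c0 p"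
    then have c: "cons_h mv D \<sigma> c0 p" and st: "\<not> (\<exists>c'. mv (last p) c')" by (auto simp: fin_play_cons)
    have "p \<noteq> []" using c unfolding cons_h_def by simp
    then have "INV (last p)" using consinv[OF c, of "length p - 1"] by (simp add: last_conv_nth)
    then show "\<not> D (last p)" using invD st by blast
  next
    fix f assume fp: "inf_play mv D \<sigma> c0 f"
    have I: "INV (f i)" for i
      using consinv[OF cons_of_inf[OF fp, of i], of i] by (simp del: upt_Suc)
    have M: "mv (f i) (f (Suc i))" for i using fp unfolding inf_play_def by blast
    have Dm: "D (f i) \<Longrightarrow> f (Suc i) = \<sigma>' (f i)" for i
      using fp unfolding inf_play_def \<sigma>_def by simp
    show "infinite {i. G (f i)}"
    proof
      assume "finite {i. G (f i)}"
      then obtain N where "\<forall>n\<in>{i. G (f i)}. n < N" using finite_nat_set_iff_bounded by blast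
      then have "\<And>i. N \<le> i \<Longrightarrow> \<not> G (f i)" by force
      then show False using desc[of f N] I M Dm by blast
    qed
  qed
  then show ?thesis unfolding dup_wins_winning by blast
qed

section \<open>Matching relations\<close>

inductive MN :: "('s \<Rightarrow> 'a \<Rightarrow> 's \<Rightarrow> bool) \<Rightarrow> 'a \<Rightarrow> ('s \<times> 's) set \<Rightarrow> 's \<Rightarrow> 'a \<Rightarrow> 's \<Rightarrow> 's \<Rightarrow> nat \<Rightarrow> bool"
  for step tau R x b x2 where
  mn_tau: "b = tau \<Longrightarrow> (x2, y) \<in> R \<Longrightarrow> MN step tau R x b x2 y 0"
| mn_vis: "step y b y' \<Longrightarrow> (x2, y') \<in> R \<Longrightarrow> MN step tau R x b x2 y 0"
| mn_step: "step y tau y1 \<Longrightarrow> (x, y1) \<in> R \<Longrightarrow> MN step tau R x b x2 y1 n \<Longrightarrow> MN step tau R x b x2 y (Suc n)"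

lemma MN_mono: "MN step tau R x b x2 y n \<Longrightarrow> R \<subseteq> R' \<Longrightarrow> MN step tau R' x b x2 y n"
  by (induction rule: MN.induct) (auto intro: MN.intros)

lemma MN_back: "\<not> (\<exists>n. MN step tau R x b x2 y n) \<Longrightarrow> step y tau v \<Longrightarrow> (x, v) \<in> R \<Longrightarrow>
  \<not> (\<exists>n. MN step tau R x b x2 v n)"
  by (blast intro: mn_step)

definition bisim :: "('s \<Rightarrow> 'a \<Rightarrow> 's \<Rightarrow> bool) \<Rightarrow> 'a \<Rightarrow> ('s \<times> 's) set \<Rightarrow> bool" where
  "bisim step tau R \<longleftrightarrow> (\<forall>x y. (x, y) \<in> R \<longrightarrow> (y, x) \<in> R \<and>
      (\<forall>b x2. step x b x2 \<longrightarrow> (\<exists>n. MN step tau R x b x2 y n)))"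

definition mdepth where
  "mdepth step tau R x b x2 y = (LEAST n. MN step tau R x b x2 y n)"

definition nexty where
  "nexty step tau R x b x2 y = (SOME y1. step y tau y1 \<and> (x, y1) \<in> R \<and>
       MN step tau R x b x2 y1 (mdepth step tau R x b x2 y - 1))"

lemma nexty_prop:
  assumes "\<not> (b = tau \<and> (x2, y) \<in> R)" "\<not> (\<exists>y'. step y b y' \<and> (x2, y') \<in> R)"
    "MN step tau R x b x2 y n"
  shows "step y tau (nexty step tau R x b x2 y) \<and> (x, nexty step tau R x b x2 y) \<in> R \<and>
     mdepth step tau R x b x2 (nexty step tau R x b x2 y) < mdepth step tau R x b x2 y"
proof -
  let ?d = "mdepth step tau R x b x2 y"
  have M: "MN step tau R x b x2 y ?d" unfolding mdepth_def by (rule LeastI, rule assms(3))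
  have "?d \<noteq> 0"
  proof
    assume "?d = 0"
    with M have "MN step tau R x b x2 y 0" by simp
    then show False using assms(1,2) by (cases rule: MN.cases) auto
  qed
  then obtain m where dm: "?d = Suc m" by (cases ?d) auto
  with M have "MN step tau R x b x2 y (Suc m)" by simp
  then have "\<exists>y1. step y tau y1 \<and> (x, y1) \<in> R \<and> MN step tau R x b x2 y1 (?d - 1)"
    using dm by (cases rule: MN.cases) auto
  then have P: "step y tau (nexty step tau R x b x2 y) \<and> (x, nexty step tau R x b x2 y) \<in> R \<and>
       MN step tau R x b x2 (nexty step tau R x b x2 y) (?d - 1)"
    unfolding nexty_def by (rule someI_ex)
  then have "mdepth step tau R x b x2 (nexty step tau R x b x2 y) \<le> ?d - 1"
    unfolding mdepth_def[of _ _ _ _ _ _ "nexty step tau R x b x2 y"] by (rule Least_le[OF conjunct2[OF conjunct2]])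
  then show ?thesis using P dm by simp
qed

section \<open>Bisimulation relation gives a winning strategy in the branching game\<close>

fun \<sigma>b where
  "\<sigma>b step tau R (BD (x, y) (Some (b, x2)) r) =
    (if b = tau \<and> (x2, y) \<in> R then BS (x2, y) None True
     else if \<exists>y'. step y b y' \<and> (x2, y') \<in> R then BS (x2, SOME y'. step y b y' \<and> (x2, y') \<in> R) None True
     else if \<exists>n. MN step tau R x b x2 y n then BS (x, nexty step tau R x b x2 y) (Some (b, x2)) False
     else SOME g. bmove step tau (BD (x, y) (Some (b, x2)) r) g)"
| "\<sigma>b step tau R c = (SOME g. bmove step tau c g)"

fun INVb where
  "INVb step R (BS (x, y) c r) = ((x, y) \<in> R)"
| "INVb step R (BD (x, y) c r) = ((x, y) \<in> R \<and> (\<exists>a u. c = Some (a, u) \<and> step x a u))"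

lemma bmove_S_D: "bmove step tau (BS p c r) g \<Longrightarrow> bdup g"
  by (cases p) auto

lemma bmove_D_S: "bmove step tau (BD p c r) g \<Longrightarrow> \<not> bdup g"
  by (cases p; cases c) auto

lemma \<sigma>b_legal:
  assumes "\<exists>g. bmove step tau c g"
  shows "bmove step tau c (\<sigma>b step tau R c)"
proof (cases c)
  case (BS p cc r)
  obtain x y where p: "p = (x, y)" by (cases p)
  have "\<sigma>b step tau R c = (SOME g. bmove step tau c g)" using BS p by (simp del: bmove.simps)
  then show ?thesis using someI_ex[OF assms] by (simp del: bmove.simps)
next
  case (BD p cc r)
  obtain x y where p: "p = (x, y)" by (cases p)
  show ?thesis
  proof (cases cc)
    case None
    then show ?thesis using assms BD p by auto
  next
    case (Some bx)
    obtain b x2 where bx: "bx = (b, x2)" by (cases bx)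
    have S: "bmove step tau c (SOME g. bmove step tau c g)" using assms by (rule someI_ex)
    show ?thesis
    proof (cases "b = tau \<and> (x2, y) \<in> R")
      case True then show ?thesis using BD p Some bx by simp
    next
      case F1: False
      show ?thesis
      proof (cases "\<exists>y'. step y b y' \<and> (x2, y') \<in> R")
        case True
        then have "step y b (SOME y'. step y b y' \<and> (x2, y') \<in> R)" by (metis (mono_tags, lifting) someI_ex)
        then show ?thesis using BD p Some bx F1 True by auto
      next
        case F2: False
        show ?thesis
        proof (cases "\<exists>n. MN step tau R x b x2 y n")
          case True
          then obtain n where "MN step tau R x b x2 y n" by blast
          from nexty_prop[OF F1 F2 this] show ?thesis using BD p Some bx F1 F2 True by auto
        next
          case False
          then have "\<sigma>b step tau R c = (SOME g. bmove step tau c g)"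
            unfolding BD p Some bx by (simp only: \<sigma>b.simps F1 F2 False if_False)
          then show ?thesis using S by (simp del: bmove.simps)
        qed
      qed
    qed
  qed
qed

lemma \<sigma>b_inv:
  assumes bis: "bisim step tau R" and I: "INVb step R c" and D: "bdup c"
  shows "bmove step tau c (\<sigma>b step tau R c) \<and> INVb step R (\<sigma>b step tau R c)"
proof -
  obtain p cc r where c: "c = BD p cc r" using D by (cases c) auto
  obtain x y where p: "p = (x, y)" by (cases p)
  obtain b x2 where cc: "cc = Some (b, x2)" and R: "(x, y) \<in> R" and st: "step x b x2"
    using I c p by auto
  obtain n where M: "MN step tau R x b x2 y n" using bis R st unfolding bisim_def by blast
  have ex: "\<exists>g. bmove step tau c g"
  proof (cases rule: MN.cases[OF M])
    case 1 then show ?thesis using c p cc by auto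
  next
    case 2 then show ?thesis using c p cc by auto
  next
    case 3 then show ?thesis using c p cc by auto
  qed
  have "INVb step R (\<sigma>b step tau R c)"
  proof (cases "b = tau \<and> (x2, y) \<in> R")
    case True then show ?thesis using c p cc by simp
  next
    case F1: False
    show ?thesis
    proof (cases "\<exists>y'. step y b y' \<and> (x2, y') \<in> R")
      case True
      then have "(x2, SOME y'. step y b y' \<and> (x2, y') \<in> R) \<in> R" by (metis (mono_tags, lifting) someI_ex)
      then show ?thesis using c p cc F1 True by auto
    next
      case F2: False
      from nexty_prop[OF F1 F2 M] show ?thesis using c p cc F1 F2 M by auto
    qed
  qed
  then show ?thesis using \<sigma>b_legal[OF ex] by blast
qed

lemma \<sigma>b_false:
  assumes bis: "bisim step tau R" and R: "(x, y) \<in> R" and st: "step x b x2"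
    and nf: "\<not> breward (\<sigma>b step tau R (BD (x, y) (Some (b, x2)) r))"
  shows "\<sigma>b step tau R (BD (x, y) (Some (b, x2)) r) = BS (x, nexty step tau R x b x2 y) (Some (b, x2)) False \<and>
    (x, nexty step tau R x b x2 y) \<in> R \<and>
    mdepth step tau R x b x2 (nexty step tau R x b x2 y) < mdepth step tau R x b x2 y"
proof -
  obtain n where M: "MN step tau R x b x2 y n" using bis R st unfolding bisim_def by blast
  have F1: "\<not> (b = tau \<and> (x2, y) \<in> R)" using nf by auto
  have F2: "\<not> (\<exists>y'. step y b y' \<and> (x2, y') \<in> R)" using nf F1 by (auto split: if_splits)
  show ?thesis using nexty_prop[OF F1 F2 M] F1 F2 M by auto
qed

lemma bS_false:
  assumes "bmove step tau (BS (x, y) (Some (b, x2)) r) g" "\<not> breward g"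
  shows "g = BD (x, y) (Some (b, x2)) False"
  using assms by auto

lemma bisim_branching:
  assumes bis: "bisim step tau R" and st: "(s, t) \<in> R"
  shows "branching_bisim step tau s t"
  unfolding branching_bisim_def
proof (rule positional_win[where INV = "INVb step R" and \<sigma>' = "\<sigma>b step tau R"])
  show "INVb step R (BS (s, t) None False)" using st by simp
next
  fix c c' assume I: "INVb step R c" and nd: "\<not> bdup c" and m: "bmove step tau c c'"
  obtain p cc r where c: "c = BS p cc r" using nd by (cases c) auto
  obtain x y where p: "p = (x, y)" by (cases p)
  have xy: "(x, y) \<in> R" "(y, x) \<in> R" using I c p bis unfolding bisim_def by auto
  show "INVb step R c'" using m c p xy by auto
next
  fix c assume "INVb step R c" "bdup c"
  then show "bmove step tau c (\<sigma>b step tau R c) \<and> INVb step R (\<sigma>b step tau R c)"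
    using \<sigma>b_inv[OF bis] by blast
next
  fix c :: "('a, 'b) bconf" assume "\<exists>c'. bmove step tau c c'"
  then show "bmove step tau c (\<sigma>b step tau R c)" by (rule \<sigma>b_legal)
next
  fix f :: "nat \<Rightarrow> ('a, 'b) bconf" and N
  assume I: "\<And>i. INVb step R (f i)" and M: "\<And>i. bmove step tau (f i) (f (Suc i))"
    and Ds: "\<And>i. bdup (f i) \<Longrightarrow> f (Suc i) = \<sigma>b step tau R (f i)"
    and G: "\<And>i. N \<le> i \<Longrightarrow> \<not> breward (f i)"
  obtain i0 where i0: "N \<le> i0" "bdup (f i0)"
  proof (cases "bdup (f N)")
    case True then show ?thesis using that by blast
  next
    case False
    then obtain p cc r where "f N = BS p cc r" by (cases "f N") auto
    then have "bdup (f (Suc N))" using M[of N] bmove_S_D by metis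
    then show ?thesis using that[of "Suc N"] by simp
  qed
  obtain x y0 b x2 r0 where f0: "f i0 = BD (x, y0) (Some (b, x2)) r0" and R0: "(x, y0) \<in> R"
    and st: "step x b x2"
    using I[of i0] i0(2) by (cases "f i0" rule: bdup.cases) auto
  have claim: "\<exists>y r. f (i0 + 2 * k) = BD (x, y) (Some (b, x2)) r \<and> (x, y) \<in> R \<and>
      mdepth step tau R x b x2 y + k \<le> mdepth step tau R x b x2 y0" for k
  proof (induction k)
    case 0 then show ?case using f0 R0 by auto
  next
    case (Suc k)
    then obtain y r where fy: "f (i0 + 2 * k) = BD (x, y) (Some (b, x2)) r" and R: "(x, y) \<in> R"
      and d: "mdepth step tau R x b x2 y + k \<le> mdepth step tau R x b x2 y0" by blast
    let ?i = "i0 + 2 * k"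
    have f1: "f (Suc ?i) = \<sigma>b step tau R (BD (x, y) (Some (b, x2)) r)" using Ds[of ?i] fy by simp
    have "\<not> breward (f (Suc ?i))" using G i0(1) by simp
    then have nf: "\<not> breward (\<sigma>b step tau R (BD (x, y) (Some (b, x2)) r))" using f1 by simp
    note X = \<sigma>b_false[OF bis R st nf]
    let ?y1 = "nexty step tau R x b x2 y"
    have f1': "f (Suc ?i) = BS (x, ?y1) (Some (b, x2)) False" using X f1 by simp
    have "\<not> breward (f (Suc (Suc ?i)))" using G i0(1) by simp
    then have "f (Suc (Suc ?i)) = BD (x, ?y1) (Some (b, x2)) False"
      using bS_false M[of "Suc ?i"] f1' by metis
    moreover have "i0 + 2 * Suc k = Suc (Suc ?i)" by simp
    ultimately show ?case using X d by (intro exI[of _ ?y1] exI[of _ False]) auto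
  qed
  from claim[of "Suc (mdepth step tau R x b x2 y0)"] show False by auto
qed

section \<open>Bisimulation relation gives a winning strategy in the generic game\<close>

fun \<sigma>g0 where
  "\<sigma>g0 step tau R (GD (x, y) (Some (b, x2)) m r) =
    (if b = tau \<and> (x2, y) \<in> R then GS (x2, y) None None True
     else if \<exists>y'. step y b y' \<and> (x2, y') \<in> R then GS (x2, SOME y'. step y b y' \<and> (x2, y') \<in> R) None None True
     else GS (x, nexty step tau R x b x2 y) (Some (b, x2)) (Some (nexty step tau R x b x2 y, Frown)) False)"
| "\<sigma>g0 step tau R c = c"

definition \<sigma>g where
  "\<sigma>g step tau R c = (if gmove step tau c (\<sigma>g0 step tau R c) then \<sigma>g0 step tau R c else SOME g. gmove step tau c g)"

fun INVg where
  "INVg step R (GS (x, y) c m r) = ((x, y) \<in> R \<and> (\<forall>a u. c = Some (a, u) \<longrightarrow> m = Some (y, Frown) \<and> step x a u))"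
| "INVg step R (GD (x, y) c m r) = ((x, y) \<in> R \<and> (\<exists>a u. c = Some (a, u) \<and> step x a u \<and> m = Some (y, Frown)))"

lemma gmove_S_D: "gmove step tau (GS p c m r) g \<Longrightarrow> gdup g"
  by (cases p) auto

lemma \<sigma>g_legal: "\<exists>g. gmove step tau c g \<Longrightarrow> gmove step tau c (\<sigma>g step tau R c)"
  unfolding \<sigma>g_def by (auto intro: someI_ex)

lemma \<sigma>g0_inv:
  assumes bis: "bisim step tau R" and I: "INVg step R c" and D: "gdup c"
  shows "gmove step tau c (\<sigma>g0 step tau R c) \<and> INVg step R (\<sigma>g0 step tau R c)"
proof -
  obtain p cc m r where c: "c = GD p cc m r" using D by (cases c) auto
  obtain x y where p: "p = (x, y)" by (cases p)
  obtain b x2 where cc: "cc = Some (b, x2)" and R: "(x, y) \<in> R" and st: "step x b x2"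
    and m: "m = Some (y, Frown)"
    using I c p by auto
  obtain n where M: "MN step tau R x b x2 y n" using bis R st unfolding bisim_def by blast
  show ?thesis
  proof (cases "b = tau \<and> (x2, y) \<in> R")
    case True then show ?thesis using c p cc m by simp
  next
    case F1: False
    show ?thesis
    proof (cases "\<exists>y'. step y b y' \<and> (x2, y') \<in> R")
      case True
      then have "step y b (SOME y'. step y b y' \<and> (x2, y') \<in> R) \<and> (x2, SOME y'. step y b y' \<and> (x2, y') \<in> R) \<in> R"
        by (metis (mono_tags, lifting) someI_ex)
      then show ?thesis using c p cc m F1 True by auto
    next
      case F2: False
      from nexty_prop[OF F1 F2 M] show ?thesis using c p cc m F1 F2 st by auto
    qed
  qed
qed

lemma \<sigma>g_inv:
  assumes bis: "bisim step tau R" and I: "INVg step R c" and D: "gdup c"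
  shows "\<sigma>g step tau R c = \<sigma>g0 step tau R c \<and> gmove step tau c (\<sigma>g step tau R c) \<and> INVg step R (\<sigma>g step tau R c)"
  using \<sigma>g0_inv[OF assms] unfolding \<sigma>g_def by simp

lemma \<sigma>g_false:
  assumes bis: "bisim step tau R" and R: "(x, y) \<in> R" and st: "step x b x2"
    and nf: "\<not> greward (\<sigma>g0 step tau R (GD (x, y) (Some (b, x2)) m r))"
  shows "\<sigma>g0 step tau R (GD (x, y) (Some (b, x2)) m r) = GS (x, nexty step tau R x b x2 y) (Some (b, x2)) (Some (nexty step tau R x b x2 y, Frown)) False \<and>
    (x, nexty step tau R x b x2 y) \<in> R \<and>
    mdepth step tau R x b x2 (nexty step tau R x b x2 y) < mdepth step tau R x b x2 y"
proof -
  obtain n where M: "MN step tau R x b x2 y n" using bis R st unfolding bisim_def by blast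
  have F1: "\<not> (b = tau \<and> (x2, y) \<in> R)" using nf by auto
  have F2: "\<not> (\<exists>y'. step y b y' \<and> (x2, y') \<in> R)" using nf F1 by (auto split: if_splits)
  show ?thesis using nexty_prop[OF F1 F2 M] F1 F2 M by auto
qed

lemma gS_false:
  assumes "gmove step tau (GS (x, y) (Some (b, x2)) mm r) g" "\<not> greward g"
  shows "g = GD (x, y) (Some (b, x2)) mm False"
  using assms by auto

lemma bisim_generic:
  assumes bis: "bisim step tau R" and st: "(s, t) \<in> R"
  shows "empty_generic_bisim step tau s t"
  unfolding empty_generic_bisim_def
proof (rule positional_win[where INV = "INVg step R" and \<sigma>' = "\<sigma>g step tau R"])
  show "INVg step R (GS (s, t) None None False)" using st by simp
next
  fix c c' assume I: "INVg step R c" and nd: "\<not> gdup c" and mv: "gmove step tau c c'"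
  obtain p cc m r where c: "c = GS p cc m r" using nd by (cases c) auto
  obtain x y where p: "p = (x, y)" by (cases p)
  have xy: "(x, y) \<in> R" "(y, x) \<in> R" using I c p bis unfolding bisim_def by auto
  show "INVg step R c'" using mv c p xy I by auto
next
  fix c assume "INVg step R c" "gdup c"
  then show "gmove step tau c (\<sigma>g step tau R c) \<and> INVg step R (\<sigma>g step tau R c)"
    using \<sigma>g_inv[OF bis] by blast
next
  fix c :: "('a, 'b) gconf" assume "\<exists>c'. gmove step tau c c'"
  then show "gmove step tau c (\<sigma>g step tau R c)" by (rule \<sigma>g_legal)
next
  fix f :: "nat \<Rightarrow> ('a, 'b) gconf" and N
  assume I: "\<And>i. INVg step R (f i)" and M: "\<And>i. gmove step tau (f i) (f (Suc i))"
    and Ds: "\<And>i. gdup (f i) \<Longrightarrow> f (Suc i) = \<sigma>g step tau R (f i)"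
    and G: "\<And>i. N \<le> i \<Longrightarrow> \<not> greward (f i)"
  obtain i0 where i0: "N \<le> i0" "gdup (f i0)"
  proof (cases "gdup (f N)")
    case True then show ?thesis using that by blast
  next
    case False
    then obtain p cc m r where "f N = GS p cc m r" by (cases "f N") auto
    then have "gdup (f (Suc N))" using M[of N] gmove_S_D by metis
    then show ?thesis using that[of "Suc N"] by simp
  qed
  obtain x y0 b x2 r0 where f0: "f i0 = GD (x, y0) (Some (b, x2)) (Some (y0, Frown)) r0" and R0: "(x, y0) \<in> R"
    and st: "step x b x2"
    using I[of i0] i0(2) by (cases "f i0" rule: gdup.cases) auto
  have claim: "\<exists>y r. f (i0 + 2 * k) = GD (x, y) (Some (b, x2)) (Some (y, Frown)) r \<and> (x, y) \<in> R \<and>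
      mdepth step tau R x b x2 y + k \<le> mdepth step tau R x b x2 y0" for k
  proof (induction k)
    case 0 then show ?case using f0 R0 by auto
  next
    case (Suc k)
    then obtain y r where fy: "f (i0 + 2 * k) = GD (x, y) (Some (b, x2)) (Some (y, Frown)) r" and R: "(x, y) \<in> R"
      and d: "mdepth step tau R x b x2 y + k \<le> mdepth step tau R x b x2 y0" by blast
    let ?i = "i0 + 2 * k"
    have "f (Suc ?i) = \<sigma>g step tau R (f ?i)" using Ds[of ?i] fy by simp
    also have "\<dots> = \<sigma>g0 step tau R (f ?i)" using \<sigma>g_inv[OF bis I[of ?i]] fy by simp
    finally have f1: "f (Suc ?i) = \<sigma>g0 step tau R (GD (x, y) (Some (b, x2)) (Some (y, Frown)) r)" using fy by simp
    have "\<not> greward (f (Suc ?i))" using G i0(1) by simp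
    then have nf: "\<not> greward (\<sigma>g0 step tau R (GD (x, y) (Some (b, x2)) (Some (y, Frown)) r))" using f1 by simp
    note X = \<sigma>g_false[OF bis R st nf]
    let ?y1 = "nexty step tau R x b x2 y"
    have f1': "f (Suc ?i) = GS (x, ?y1) (Some (b, x2)) (Some (?y1, Frown)) False" using X f1 by simp
    have "\<not> greward (f (Suc (Suc ?i)))" using G i0(1) by simp
    then have "f (Suc (Suc ?i)) = GD (x, ?y1) (Some (b, x2)) (Some (?y1, Frown)) False"
      using gS_false M[of "Suc ?i"] f1' by metis
    moreover have "i0 + 2 * Suc k = Suc (Suc ?i)" by simp
    ultimately show ?case using X d by (intro exI[of _ ?y1] exI[of _ False]) auto
  qed
  from claim[of "Suc (mdepth step tau R x b x2 y0)"] show False by auto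
qed

section \<open>Extraction from a winning strategy in the branching game\<close>

definition R0b where
  "R0b step tau \<sigma> c0 = {(x, y). \<exists>h c r. cons_h (bmove step tau) bdup \<sigma> c0 h \<and> last h = BS (x, y) c r}"

lemma R0bI: "cons_h (bmove step tau) bdup \<sigma> c0 h \<Longrightarrow> last h = BS (x, y) c r \<Longrightarrow> (x, y) \<in> R0b step tau \<sigma> c0"
  unfolding R0b_def by blast

lemma Fb:
  assumes win: "winning (bmove step tau) bdup breward \<sigma> c0"
    and h: "cons_h (bmove step tau) bdup \<sigma> c0 h" "last h = BD (x, y) (Some (b, x2)) r"
    and st: "step x b x2"
  shows "\<exists>n. MN step tau (R0b step tau \<sigma> c0) x b x2 y n"
proof (rule ccontr)
  let ?R = "R0b step tau \<sigma> c0"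
  assume nm: "\<not> (\<exists>n. MN step tau ?R x b x2 y n)"
  let ?P = "\<lambda>h. cons_h (bmove step tau) bdup \<sigma> c0 h \<and>
     (\<exists>y r. last h = BD (x, y) (Some (b, x2)) r \<and> \<not> (\<exists>n. MN step tau ?R x b x2 y n))"
  show False
  proof (rule no_bad_ext[OF win, of ?P h])
    show "?P h" using h nm by blast
  next
    fix h assume "?P h" then show "cons_h (bmove step tau) bdup \<sigma> c0 h" by blast
  next
    fix h assume Ph: "?P h"
    then obtain y r where c: "cons_h (bmove step tau) bdup \<sigma> c0 h" and l: "last h = BD (x, y) (Some (b, x2)) r"
      and nm: "\<not> (\<exists>n. MN step tau ?R x b x2 y n)" by blast
    let ?g = "\<sigma> h"
    have c1: "cons_h (bmove step tau) bdup \<sigma> c0 (h @ [?g])" using win_cons_step[OF win c] l by simp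
    have m: "bmove step tau (BD (x, y) (Some (b, x2)) r) ?g" using win_move[OF win c] l by simp
    then consider "b = tau" "?g = BS (x2, y) None True"
      | v' where "step y b v'" "?g = BS (x2, v') None True"
      | v' where "step y tau v'" "?g = BS (x, v') (Some (b, x2)) False"
      by auto
    then show "\<exists>h'. h' \<noteq> [] \<and> ?P (h @ h') \<and> (\<forall>c\<in>set h'. \<not> breward c)"
    proof cases
      case 1
      then have "(x2, y) \<in> ?R" using R0bI[OF c1] by simp
      then have "MN step tau ?R x b x2 y 0" using 1 by (intro mn_tau)
      then show ?thesis using nm by blast
    next
      case (2 v')
      then have "(x2, v') \<in> ?R" using R0bI[OF c1] by simp
      then have "MN step tau ?R x b x2 y 0" using 2 by (intro mn_vis)
      then show ?thesis using nm by blast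
    next
      case (3 v')
      then have R: "(x, v') \<in> ?R" using R0bI[OF c1, of x v' "Some (b, x2)" False] by simp
      have nm': "\<not> (\<exists>n. MN step tau ?R x b x2 v' n)"
        using MN_back[OF nm 3(1) R] .
      let ?g2 = "BD (x, v') (Some (b, x2)) False"
      have "bmove step tau ?g ?g2" using 3 st by auto
      then have c2: "cons_h (bmove step tau) bdup \<sigma> c0 ((h @ [?g]) @ [?g2])"
        using cons_snoc[OF c1] 3 by simp
      have "?P (h @ [?g, ?g2])" using c2 nm' by auto
      then show ?thesis by (intro exI[of _ "[?g, ?g2]"]) (simp add: 3)
    qed
  qed
qed

lemma branching_to_bisim:
  assumes "branching_bisim step tau s t"
  shows "\<exists>R. bisim step tau R \<and> (s, t) \<in> R"
proof -
  let ?c0 = "BS (s, t) None False"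
  obtain \<sigma> where win: "winning (bmove step tau) bdup breward \<sigma> ?c0"
    using assms unfolding branching_bisim_def dup_wins_winning by blast
  let ?Q = "R0b step tau \<sigma> ?c0"
  let ?R = "?Q \<union> ?Q\<inverse>"
  have st: "(s, t) \<in> ?Q" by (rule R0bI[where h="[?c0]" and c=None and r=False]) (simp_all add: cons_single)
  have ch: "\<exists>n. MN step tau ?R x b x2 y n" if xy: "(x, y) \<in> ?R" and sx: "step x b x2" for x y b x2
  proof -
    have "\<exists>n. MN step tau ?Q x b x2 y n"
    proof (cases "(x, y) \<in> ?Q")
      case True
      then obtain h c r where c: "cons_h (bmove step tau) bdup \<sigma> ?c0 h" and l: "last h = BS (x, y) c r"
        unfolding R0b_def by blast
      let ?g = "BD (x, y) (Some (b, x2)) (\<not> (c = Some (b, x2) \<or> c = None))"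
      have "bmove step tau (last h) ?g" using l sx by auto
      then have "cons_h (bmove step tau) bdup \<sigma> ?c0 (h @ [?g])" using cons_snoc[OF c] l by simp
      then show ?thesis by (rule Fb[OF win _ _ sx]) simp
    next
      case False
      then have "(y, x) \<in> ?Q" using xy by auto
      then obtain h c r where c: "cons_h (bmove step tau) bdup \<sigma> ?c0 h" and l: "last h = BS (y, x) c r"
        unfolding R0b_def by blast
      let ?g = "BD (x, y) (Some (b, x2)) True"
      have "bmove step tau (last h) ?g" using l sx by auto
      then have "cons_h (bmove step tau) bdup \<sigma> ?c0 (h @ [?g])" using cons_snoc[OF c] l by simp
      then show ?thesis by (rule Fb[OF win _ _ sx]) simp
    qed
    then obtain n where "MN step tau ?Q x b x2 y n" by blast
    then have "MN step tau ?R x b x2 y n" by (rule MN_mono) blast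
    then show ?thesis by blast
  qed
  have "bisim step tau ?R" unfolding bisim_def using ch by blast
  then show ?thesis using st by blast
qed

section \<open>Extraction from a winning strategy in the generic game\<close>

lemma cons_inv_last:
  assumes c: "cons_h mv D \<sigma> c0 h" and P0: "P c0" and Pm: "\<And>c c'. P c \<Longrightarrow> mv c c' \<Longrightarrow> P c'"
  shows "P (last h)"
proof -
  have "P (h ! i)" if "i < length h" for i
    using that
  proof (induction i)
    case 0 then show ?case using c P0 unfolding cons_h_def by (metis hd_conv_nth)
  next
    case (Suc i)
    then have "mv (h ! i) (h ! Suc i)" using c unfolding cons_h_def by blast
    then show ?case using Suc Pm by simp
  qed
  moreover have "h \<noteq> []" using c unfolding cons_h_def by simp
  ultimately show ?thesis by (simp add: last_conv_nth)
qed

fun INVx where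
  "INVx (GS (x, y) c m r) = (\<forall>a u. c = Some (a, u) \<longrightarrow> m = Some (y, Frown) \<or> (m = Some (y, Smile) \<and> u = x))"
| "INVx (GD (x, y) c m r) = (\<forall>a u. c = Some (a, u) \<longrightarrow> m = Some (y, Frown) \<or> (m = Some (y, Smile) \<and> u = x))"

lemma INVx_step:
  assumes "INVx c" "gmove step tau c c'"
  shows "INVx c'"
proof (cases c)
  case (GS p cc m r)
  then show ?thesis using assms by (cases p) auto
next
  case (GD p cc m r)
  obtain u v where p: "p = (u, v)" by (cases p)
  show ?thesis
  proof (cases cc)
    case None then show ?thesis using assms GD p by auto
  next
    case (Some au)
    obtain a u' where au: "au = (a, u')" by (cases au)
    show ?thesis
    proof (cases m)
      case None then show ?thesis using assms GD p Some au by auto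
    next
      case (Some vf)
      obtain vb f where vf: "vf = (vb, f)" by (cases vf)
      have I: "vb = v" "f = Smile \<Longrightarrow> u' = u" using assms(1) GD p \<open>cc = Some au\<close> au Some vf
        by (cases f; auto)+
      show ?thesis using assms(2) GD p \<open>cc = Some au\<close> au Some vf I by (cases f) auto
    qed
  qed
qed

definition R0g where
  "R0g step tau \<sigma> c0 = {(x, y). \<exists>h c m r. cons_h (gmove step tau) gdup \<sigma> c0 h \<and> last h = GS (x, y) c m r}"

lemma R0gI: "cons_h (gmove step tau) gdup \<sigma> c0 h \<Longrightarrow> last h = GS (x, y) c m r \<Longrightarrow> (x, y) \<in> R0g step tau \<sigma> c0"
  unfolding R0g_def by blast

lemma Fg:
  assumes win: "winning (gmove step tau) gdup greward \<sigma> c0"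
    and h: "cons_h (gmove step tau) gdup \<sigma> c0 h" "last h = GD (x, y) (Some (b, x2)) (Some (y, Frown)) r"
  shows "\<exists>n. MN step tau (R0g step tau \<sigma> c0) x b x2 y n"
proof (rule ccontr)
  let ?R = "R0g step tau \<sigma> c0"
  assume nm: "\<not> (\<exists>n. MN step tau ?R x b x2 y n)"
  let ?P = "\<lambda>h. cons_h (gmove step tau) gdup \<sigma> c0 h \<and>
     (\<exists>y r. last h = GD (x, y) (Some (b, x2)) (Some (y, Frown)) r \<and> \<not> (\<exists>n. MN step tau ?R x b x2 y n))"
  show False
  proof (rule no_bad_ext[OF win, of ?P h])
    show "?P h" using h nm by blast
  next
    fix h assume "?P h" then show "cons_h (gmove step tau) gdup \<sigma> c0 h" by blast
  next
    fix h assume Ph: "?P h"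
    then obtain y r where c: "cons_h (gmove step tau) gdup \<sigma> c0 h"
      and l: "last h = GD (x, y) (Some (b, x2)) (Some (y, Frown)) r"
      and nm: "\<not> (\<exists>n. MN step tau ?R x b x2 y n)" by blast
    let ?g = "\<sigma> h"
    have c1: "cons_h (gmove step tau) gdup \<sigma> c0 (h @ [?g])" using win_cons_step[OF win c] l by simp
    have m: "gmove step tau (GD (x, y) (Some (b, x2)) (Some (y, Frown)) r) ?g" using win_move[OF win c] l by simp
    then consider "b = tau" "?g = GS (x2, y) None None True"
      | v' where "step y b v'" "?g = GS (x2, v') (Some (b, x2)) (Some (v', Smile)) False"
      | v' where "step y b v'" "?g = GS (x2, v') None None True"
      | v' where "step y tau v'" "?g = GS (x, v') (Some (b, x2)) (Some (v', Frown)) False"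
      by auto
    then show "\<exists>h'. h' \<noteq> [] \<and> ?P (h @ h') \<and> (\<forall>c\<in>set h'. \<not> greward c)"
    proof cases
      case 1
      then have "(x2, y) \<in> ?R" using R0gI[OF c1, of x2 y None None True] by simp
      then have "MN step tau ?R x b x2 y 0" using 1 by (intro mn_tau)
      then show ?thesis using nm by blast
    next
      case (2 v')
      then have "(x2, v') \<in> ?R" using R0gI[OF c1, of x2 v' "Some (b, x2)" "Some (v', Smile)" False] by simp
      then have "MN step tau ?R x b x2 y 0" using 2 by (intro mn_vis)
      then show ?thesis using nm by blast
    next
      case (3 v')
      then have "(x2, v') \<in> ?R" using R0gI[OF c1, of x2 v' None None True] by simp
      then have "MN step tau ?R x b x2 y 0" using 3 by (intro mn_vis)
      then show ?thesis using nm by blast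
    next
      case (4 v')
      then have R: "(x, v') \<in> ?R" using R0gI[OF c1, of x v' "Some (b, x2)" "Some (v', Frown)" False] by simp
      have nm': "\<not> (\<exists>n. MN step tau ?R x b x2 v' n)"
        using MN_back[OF nm 4(1) R] .
      let ?g2 = "GD (x, v') (Some (b, x2)) (Some (v', Frown)) False"
      have "gmove step tau ?g ?g2" using 4 by auto
      then have c2: "cons_h (gmove step tau) gdup \<sigma> c0 ((h @ [?g]) @ [?g2])"
        using cons_snoc[OF c1] 4 by simp
      have "?P (h @ [?g, ?g2])" using c2 nm' by auto
      then show ?thesis by (intro exI[of _ "[?g, ?g2]"]) (simp add: 4)
    qed
  qed
qed

lemma Sg:
  assumes win: "winning (gmove step tau) gdup greward \<sigma> c0"
    and h: "cons_h (gmove step tau) gdup \<sigma> c0 h" "last h = GD (x, y) (Some (b, x)) (Some (y, Smile)) r"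
    and st: "step x b x"
  shows "\<exists>n. MN step tau (R0g step tau \<sigma> c0) x b x y n"
proof (rule ccontr)
  let ?R = "R0g step tau \<sigma> c0"
  assume nm: "\<not> (\<exists>n. MN step tau ?R x b x y n)"
  let ?P = "\<lambda>h. cons_h (gmove step tau) gdup \<sigma> c0 h \<and>
     (\<exists>y r. last h = GD (x, y) (Some (b, x)) (Some (y, Smile)) r \<and> \<not> (\<exists>n. MN step tau ?R x b x y n))"
  show False
  proof (rule no_bad_ext[OF win, of ?P h])
    show "?P h" using h nm by blast
  next
    fix h assume "?P h" then show "cons_h (gmove step tau) gdup \<sigma> c0 h" by blast
  next
    fix h assume Ph: "?P h"
    then obtain y r where c: "cons_h (gmove step tau) gdup \<sigma> c0 h"
      and l: "last h = GD (x, y) (Some (b, x)) (Some (y, Smile)) r"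
      and nm: "\<not> (\<exists>n. MN step tau ?R x b x y n)" by blast
    let ?g = "\<sigma> h"
    have c1: "cons_h (gmove step tau) gdup \<sigma> c0 (h @ [?g])" using win_cons_step[OF win c] l by simp
    have m: "gmove step tau (GD (x, y) (Some (b, x)) (Some (y, Smile)) r) ?g" using win_move[OF win c] l by simp
    then consider "b = tau" "?g = GS (x, y) None None True"
      | v' where "step y tau v'" "?g = GS (x, v') (Some (b, x)) (Some (v', Smile)) False"
      | v' where "step y tau v'" "?g = GS (x, v') None None True"
      by auto
    then show "\<exists>h'. h' \<noteq> [] \<and> ?P (h @ h') \<and> (\<forall>c\<in>set h'. \<not> greward c)"
    proof cases
      case 1
      then have "(x, y) \<in> ?R" using R0gI[OF c1, of x y None None True] by simp
      then have "MN step tau ?R x b x y 0" using 1 by (intro mn_tau)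
      then show ?thesis using nm by blast
    next
      case (2 v')
      then have R: "(x, v') \<in> ?R" using R0gI[OF c1, of x v' "Some (b, x)" "Some (v', Smile)" False] by simp
      have nm': "\<not> (\<exists>n. MN step tau ?R x b x v' n)"
        using MN_back[OF nm 2(1) R] .
      let ?g2 = "GD (x, v') (Some (b, x)) (Some (v', Smile)) False"
      have "gmove step tau ?g ?g2" using 2 by auto
      then have c2: "cons_h (gmove step tau) gdup \<sigma> c0 ((h @ [?g]) @ [?g2])"
        using cons_snoc[OF c1] 2 by simp
      have "?P (h @ [?g, ?g2])" using c2 nm' by auto
      then show ?thesis by (intro exI[of _ "[?g, ?g2]"]) (simp add: 2)
    next
      case (3 v')
      then have R: "(x, v') \<in> ?R" using R0gI[OF c1, of x v' None None True] by simp
      let ?g2 = "GD (x, v') (Some (b, x)) (Some (v', Frown)) False"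
      have "gmove step tau ?g ?g2" using 3 st by auto
      then have c2: "cons_h (gmove step tau) gdup \<sigma> c0 ((h @ [?g]) @ [?g2])"
        using cons_snoc[OF c1] 3 by simp
      have "\<exists>n. MN step tau ?R x b x v' n" by (rule Fg[OF win c2, where r=False]) simp
      then show ?thesis using MN_back[OF nm 3(1) R] by blast
    qed
  qed
qed

lemma generic_to_bisim:
  assumes "empty_generic_bisim step tau s t"
  shows "\<exists>R. bisim step tau R \<and> (s, t) \<in> R"
proof -
  let ?c0 = "GS (s, t) None None False"
  obtain \<sigma> where win: "winning (gmove step tau) gdup greward \<sigma> ?c0"
    using assms unfolding empty_generic_bisim_def dup_wins_winning by blast
  let ?Q = "R0g step tau \<sigma> ?c0"
  let ?R = "?Q \<union> ?Q\<inverse>"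
  have st: "(s, t) \<in> ?Q" by (rule R0gI[where h="[?c0]" and c=None and m=None and r=False]) (simp_all add: cons_single)
  have ch: "\<exists>n. MN step tau ?R x b x2 y n" if xy: "(x, y) \<in> ?R" and sx: "step x b x2" for x y b x2
  proof -
    have "\<exists>n. MN step tau ?Q x b x2 y n"
    proof (cases "(x, y) \<in> ?Q")
      case True
      then obtain h c m r where c: "cons_h (gmove step tau) gdup \<sigma> ?c0 h" and l: "last h = GS (x, y) c m r"
        unfolding R0g_def by blast
      have I: "INVx (last h)" by (rule cons_inv_last[OF c]) (auto intro: INVx_step)
      show ?thesis
      proof (cases "c = Some (b, x2)")
        case False
        let ?g = "GD (x, y) (Some (b, x2)) (Some (y, Frown)) True"
        have "gmove step tau (last h) ?g" using l sx False by auto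
        then have "cons_h (gmove step tau) gdup \<sigma> ?c0 (h @ [?g])" using cons_snoc[OF c] l by simp
        then show ?thesis by (rule Fg[OF win]) simp
      next
        case True
        then have "m = Some (y, Frown) \<or> (m = Some (y, Smile) \<and> x2 = x)" using I l by simp
        then show ?thesis
        proof
          assume m: "m = Some (y, Frown)"
          let ?g = "GD (x, y) (Some (b, x2)) (Some (y, Frown)) False"
          have "gmove step tau (last h) ?g" using l True m by auto
          then have "cons_h (gmove step tau) gdup \<sigma> ?c0 (h @ [?g])" using cons_snoc[OF c] l by simp
          then show ?thesis by (rule Fg[OF win, where r=False]) simp
        next
          assume m: "m = Some (y, Smile) \<and> x2 = x"
          let ?g = "GD (x, y) (Some (b, x)) (Some (y, Smile)) False"
          have "gmove step tau (last h) ?g" using l True m by auto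
          then have c2: "cons_h (gmove step tau) gdup \<sigma> ?c0 (h @ [?g])" using cons_snoc[OF c] l by simp
          have sxx: "step x b x" using sx m by simp
          have "last (h @ [?g]) = ?g" by simp
          then have "\<exists>n. MN step tau ?Q x b x y n" by (rule Sg[OF win c2 _ sxx])
          then show ?thesis using m by simp
        qed
      qed
    next
      case False
      then have "(y, x) \<in> ?Q" using xy by auto
      then obtain h c m r where c: "cons_h (gmove step tau) gdup \<sigma> ?c0 h" and l: "last h = GS (y, x) c m r"
        unfolding R0g_def by blast
      let ?g = "GD (x, y) (Some (b, x2)) (Some (y, Frown)) True"
      have "gmove step tau (last h) ?g" using l sx by auto
      then have "cons_h (gmove step tau) gdup \<sigma> ?c0 (h @ [?g])" using cons_snoc[OF c] l by simp
      then show ?thesis by (rule Fg[OF win]) simp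
    qed
    then obtain n where "MN step tau ?Q x b x2 y n" by blast
    then have "MN step tau ?R x b x2 y n" by (rule MN_mono) blast
    then show ?thesis by blast
  qed
  have "bisim step tau ?R" unfolding bisim_def using ch by blast
  then show ?thesis using st by blast
qed

theorem theorem5p14:
  fixes step :: "'s \<Rightarrow> 'a \<Rightarrow> 's \<Rightarrow> bool" and tau :: 'a and s t :: 's
  shows "branching_bisim step tau s t \<longleftrightarrow> empty_generic_bisim step tau s t"
  using branching_to_bisim bisim_generic generic_to_bisim bisim_branching by metis

end
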